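(* Fix any number of agents and items and any reported strict linear orders of all agents over all items, and consider the simultaneous eating algorithm in two scenarios. In the normal scenario, all agents eat according to the algorithm throughout. In the pause scenario, the process is identical to the normal scenario up to a time $t$; from time $t$ on, some set $S$ of agents is paused (eats nothing) for some period of time (of arbitrary length, possibly forever), after which these agents resume eating according to the algorithm, while all agents outside $S$ continue eating according to the algorithm throughout. Then for every item and every moment $s \ge t$ (up to the moment the item is exhausted in the normal scenario), the remaining amount of that item at time $s$ in the pause scenario is at least its remaining amount at time $s$ in the normal scenario.
   Context: Simultaneous eating algorithm: there are agents and divisible items of unit supply; each agent has a reported strict linear order over all items. Every non-paused agent consumes, at rate $1$ per unit time, its most preferred item (according to its report) among the items with positive remaining supply; when an item is exhausted, the agents consuming it move on to their most preferred item still having positive remaining supply. A paused agent consumes nothing while paused. *)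

theory Defs
  imports "HOL-Analysis.Analysis"
begin

text \<open>Preferences: for each agent i, P i is a strict linear order on the items;
  (x, y) \<in> P i means agent i strictly prefers item x to item y.
  A :: real \<Rightarrow> 'a set gives the set of non-paused (active) agents at each time.
  r :: real \<Rightarrow> 'o \<Rightarrow> real gives the remaining supply of each item at each time.\<close>

definition eats :: "('a \<Rightarrow> ('o \<times> 'o) set) \<Rightarrow> (real \<Rightarrow> 'a set) \<Rightarrow> (real \<Rightarrow> 'o \<Rightarrow> real)
    \<Rightarrow> 'a \<Rightarrow> 'o \<Rightarrow> real \<Rightarrow> bool" where
  "eats P A r i x \<tau> \<longleftrightarrow> i \<in> A \<tau> \<and> r \<tau> x > 0 \<and>
     (\<forall>y. r \<tau> y > 0 \<longrightarrow> y = x \<or> (x, y) \<in> P i)"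

definition eat_rate :: "('a::finite \<Rightarrow> ('o \<times> 'o) set) \<Rightarrow> (real \<Rightarrow> 'a set) \<Rightarrow> (real \<Rightarrow> 'o \<Rightarrow> real)
    \<Rightarrow> 'o \<Rightarrow> real \<Rightarrow> real" where
  "eat_rate P A r x \<tau> = real (card {i. eats P A r i x \<tau>})"

definition eating_run :: "('a::finite \<Rightarrow> ('o \<times> 'o) set) \<Rightarrow> (real \<Rightarrow> 'a set) \<Rightarrow> (real \<Rightarrow> 'o \<Rightarrow> real) \<Rightarrow> bool" where
  "eating_run P A r \<longleftrightarrow>
     (\<forall>x s. s \<ge> 0 \<longrightarrow> ((\<lambda>\<tau>. eat_rate P A r x \<tau>) has_integral (1 - r s x)) {0..s})"

text \<open>Activity pattern of the pause scenario: agents in S are paused during [t, u)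
  (u = \<infinity> means paused forever), everybody is active otherwise.\<close>
definition pause_pattern :: "'a set \<Rightarrow> real \<Rightarrow> ereal \<Rightarrow> real \<Rightarrow> 'a set" where
  "pause_pattern S t u \<tau> = (if t \<le> \<tau> \<and> ereal \<tau> < u then - S else UNIV)"

end

theory Submission
  imports Defs
begin

lemma rate_bounds:
  "0 \<le> eat_rate P A r y \<tau>" "eat_rate P A r y \<tau> \<le> real CARD('a)"
  for P :: "'a::finite \<Rightarrow> ('o \<times> 'o) set"
  unfolding eat_rate_def by (auto intro: card_mono)

lemma seg:
  fixes P :: "'a::finite \<Rightarrow> ('o \<times> 'o) set"
  assumes run: "eating_run P A r" and "0 \<le> a" "a \<le> b"
  shows "((\<lambda>\<tau>. eat_rate P A r y \<tau>) has_integral (r a y - r b y)) {a..b}"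
proof -
  let ?f = "\<lambda>\<tau>. eat_rate P A r y \<tau>"
  have hb: "(?f has_integral (1 - r b y)) {0..b}" and ha: "(?f has_integral (1 - r a y)) {0..a}"
    using run assms unfolding eating_run_def by auto
  have ib: "?f integrable_on {0..b}" using hb by blast
  have iab: "?f integrable_on {a..b}"
    by (rule integrable_subinterval_real[OF ib]) (use assms in auto)
  have "integral {0..a} ?f + integral {a..b} ?f = integral {0..b} ?f"
    by (rule Henstock_Kurzweil_Integration.integral_combine) (use assms ib in auto)
  then have "integral {a..b} ?f = r a y - r b y"
    using integral_unique[OF ha] integral_unique[OF hb] by simp
  then show ?thesis using iab by (metis has_integral_integrable_integral)
qed

lemma r_mono:
  fixes P :: "'a::finite \<Rightarrow> ('o \<times> 'o) set"
  assumes run: "eating_run P A r" and "0 \<le> a" "a \<le> b"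
  shows "r b y \<le> r a y"
  using has_integral_nonneg[OF seg[OF assms, of y]] rate_bounds by fastforce

lemma r_lip:
  fixes P :: "'a::finite \<Rightarrow> ('o \<times> 'o) set"
  assumes run: "eating_run P A r" and "0 \<le> a" "a \<le> b"
  shows "r a y - r b y \<le> real CARD('a) * (b - a)"
proof -
  have "r a y - r b y \<le> Henstock_Kurzweil_Integration.content {a..b} *\<^sub>R real CARD('a)"
    by (rule has_integral_le[OF seg[OF assms, of y] has_integral_const_real]) (simp add: rate_bounds)
  then show ?thesis using assms by (simp add: mult.commute)
qed

lemma r_zero:
  fixes P :: "'a::finite \<Rightarrow> ('o \<times> 'o) set"
  assumes run: "eating_run P A r"
  shows "r 0 y = 1"
proof -
  have "((\<lambda>\<tau>. eat_rate P A r y \<tau>) has_integral (1 - r 0 y)) {0..0}"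
    using run unfolding eating_run_def by (metis order_refl)
  then show ?thesis using has_integral_unique[OF _ has_integral_refl(2)] by fastforce
qed

lemma r_cont:
  fixes P :: "'a::finite \<Rightarrow> ('o \<times> 'o) set"
  assumes run: "eating_run P A r"
  shows "continuous_on {0..} (\<lambda>\<tau>. r \<tau> y)"
proof (rule lipschitz_on_continuous_on)
  show "(real CARD('a))-lipschitz_on {0..} (\<lambda>\<tau>. r \<tau> y)"
  proof (rule lipschitz_onI)
    fix a b :: real assume "a \<in> {0..}" "b \<in> {0..}"
    then show "dist (r a y) (r b y) \<le> real CARD('a) * dist a b"
      using r_lip[OF run, of a b y] r_lip[OF run, of b a y] r_mono[OF run, of a b y] r_mono[OF run, of b a y]
      by (cases "a \<le> b") (auto simp: dist_real_def abs_if)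
  qed simp
qed

lemma r_stuck:
  fixes P :: "'a::finite \<Rightarrow> ('o \<times> 'o) set"
  assumes run: "eating_run P A r" and "0 \<le> a" "a \<le> b" and "r a y \<le> 0"
  shows "r b y = r a y"
proof -
  have "((\<lambda>\<tau>. eat_rate P A r y \<tau>) has_integral 0) {a..b}"
  proof (rule has_integral_eq[OF _ has_integral_0])
    fix \<tau> assume "\<tau> \<in> {a..b}"
    then have "r \<tau> y \<le> 0" using r_mono[OF run, of a \<tau> y] assms by auto
    then show "0 = eat_rate P A r y \<tau>" unfolding eat_rate_def eats_def by auto
  qed
  then show ?thesis using has_integral_unique[OF seg[OF assms(1-3), of y]] by fastforce
qed

lemma r_nonneg:
  fixes P :: "'a::finite \<Rightarrow> ('o \<times> 'o) set"
  assumes run: "eating_run P A r" and "0 \<le> b"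
  shows "0 \<le> r b y"
proof (rule ccontr)
  assume "\<not> 0 \<le> r b y"
  moreover have "continuous_on {0..b} (\<lambda>\<tau>. r \<tau> y)"
    using r_cont[OF run] by (rule continuous_on_subset) auto
  ultimately obtain c where c: "0 \<le> c" "c \<le> b" "r c y = 0"
    using IVT2'[of "\<lambda>\<tau>. r \<tau> y" b 0 0] r_zero[OF run] assms by auto
  then show False using r_stuck[OF run c(1,2)] \<open>\<not> 0 \<le> r b y\<close> by simp
qed

lemma local_step:
  fixes P :: "'a::finite \<Rightarrow> ('o::finite \<times> 'o) set"
  assumes run1: "eating_run P (\<lambda>_. UNIV) r" and run2: "eating_run P A r'"
    and t0: "0 \<le> \<tau>0" and good: "\<forall>y. r \<tau>0 y \<le> r' \<tau>0 y"
  shows "\<exists>b>\<tau>0. \<forall>\<tau>. \<tau>0 \<le> \<tau> \<and> \<tau> < b \<longrightarrow> (\<forall>y. r \<tau> y \<le> r' \<tau> y)"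
proof -
  define C where "C = real CARD('a)"
  have C0: "0 \<le> C" unfolding C_def by simp
  have ev: "eventually (\<lambda>\<tau>. r \<tau>0 y > 0 \<longrightarrow> r \<tau> y > 0 \<and> r' \<tau> y > 0) (at_right \<tau>0)" for y
  proof (cases "r \<tau>0 y > 0")
    case False then show ?thesis by simp
  next
    case True
    define d where "d = r \<tau>0 y / (C + 1)"
    have d0: "d > 0" using True C0 unfolding d_def by simp
    have Cd: "C * d < r \<tau>0 y"
    proof -
      have "C * d = r \<tau>0 y * (C / (C + 1))" unfolding d_def using C0 by (simp add: field_simps)
      also have "\<dots> < r \<tau>0 y * 1" using True C0 by (intro mult_strict_left_mono) auto
      finally show ?thesis by simp
    qed
    show ?thesis unfolding eventually_at_right_field
    proof (intro exI[of _ "\<tau>0 + d"] conjI allI impI)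
      show "\<tau>0 < \<tau>0 + d" using d0 by simp
      fix \<tau> assume a: "\<tau>0 < \<tau>" "\<tau> < \<tau>0 + d"
      have "C * (\<tau> - \<tau>0) \<le> C * d" using a C0 by (intro mult_left_mono) auto
      then show "0 < r \<tau> y" "0 < r' \<tau> y"
        using r_lip[OF run1 t0, of \<tau> y] r_lip[OF run2 t0, of \<tau> y] a Cd good
        unfolding C_def by (smt (verit))+
    qed
  qed
  have "eventually (\<lambda>\<tau>. \<forall>y. r \<tau>0 y > 0 \<longrightarrow> r \<tau> y > 0 \<and> r' \<tau> y > 0) (at_right \<tau>0)"
    by (rule eventually_all_finite) (rule ev)
  then obtain b where b: "b > \<tau>0"
    and bQ: "\<And>\<tau>. \<tau> > \<tau>0 \<Longrightarrow> \<tau> < b \<Longrightarrow> \<forall>y. r \<tau>0 y > 0 \<longrightarrow> r \<tau> y > 0 \<and> r' \<tau> y > 0"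
    unfolding eventually_at_right_field by blast
  have Q: "\<forall>y. r \<tau>0 y > 0 \<longrightarrow> r \<sigma> y > 0 \<and> r' \<sigma> y > 0" if "\<tau>0 \<le> \<sigma>" "\<sigma> < b" for \<sigma>
  proof (cases "\<sigma> = \<tau>0")
    case True then show ?thesis using good by (auto intro: less_le_trans)
  next
    case False then show ?thesis using bQ that by auto
  qed
  show ?thesis
  proof (intro exI[of _ b] conjI allI impI b)
    fix \<tau> y assume tau: "\<tau>0 \<le> \<tau> \<and> \<tau> < b"
    show "r \<tau> y \<le> r' \<tau> y"
    proof (cases "r \<tau>0 y > 0")
      case False
      then show ?thesis using r_mono[OF run1 t0, of \<tau> y] r_nonneg[OF run2, of \<tau> y] tau t0 by auto
    next
      case True
      have le: "eat_rate P A r' y \<sigma> \<le> eat_rate P (\<lambda>_. UNIV) r y \<sigma>" if sig: "\<sigma> \<in> {\<tau>0..\<tau>}" for \<sigma>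
      proof -
        have Qs: "\<forall>y. r \<tau>0 y > 0 \<longrightarrow> r \<sigma> y > 0 \<and> r' \<sigma> y > 0" using Q sig tau by auto
        have pos: "r' \<sigma> z > 0" if "r \<sigma> z > 0" for z
        proof -
          have "r \<sigma> z \<le> r \<tau>0 z" using r_mono[OF run1 t0, of \<sigma> z] sig by auto
          then show ?thesis using Qs that by auto
        qed
        have "{i. eats P A r' i y \<sigma>} \<subseteq> {i. eats P (\<lambda>_. UNIV) r i y \<sigma>}"
          using Qs True pos unfolding eats_def by auto
        then show ?thesis unfolding eat_rate_def by (simp add: card_mono)
      qed
      have "r' \<tau>0 y - r' \<tau> y \<le> r \<tau>0 y - r \<tau> y"
        by (rule has_integral_le[OF seg[OF run2 t0, of \<tau> y] seg[OF run1 t0, of \<tau> y]])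
           (use tau le in auto)
      then show ?thesis using good by smt
    qed
  qed
qed

theorem lemma2:
  fixes P :: "'a::finite \<Rightarrow> ('o::finite \<times> 'o) set"
    and S :: "'a set" and t :: real and u :: ereal
    and r r' :: "real \<Rightarrow> 'o \<Rightarrow> real"
    and x :: 'o and s :: real
  assumes "\<And>i. strict_linear_order (P i)"
    and "t \<ge> 0" and "ereal t \<le> u"
    and "eating_run P (\<lambda>_. UNIV) r"
    and "eating_run P (pause_pattern S t u) r'"
    and "s \<ge> t"
    and "\<forall>\<tau>. 0 \<le> \<tau> \<and> \<tau> < s \<longrightarrow> r \<tau> x > 0"
  shows "r' s x \<ge> r s x"
proof -
  note run1 = assms(4) and run2 = assms(5)
  define C where "C = real CARD('a)"
  have C0: "0 \<le> C" unfolding C_def by simp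
  define B where "B = {\<tau>. 0 \<le> \<tau> \<and> \<not> (\<forall>y. r \<tau> y \<le> r' \<tau> y)}"
  have "B = {}"
  proof (rule ccontr)
    assume "B \<noteq> {}"
    have bdd: "bdd_below B" unfolding B_def by (rule bdd_belowI[of _ 0]) auto
    define m where "m = Inf B"
    have lower: "m \<le> \<tau>" if "\<tau> \<in> B" for \<tau> unfolding m_def using bdd that by (rule cInf_lower[rotated])
    have m0: "0 \<le> m" unfolding m_def using \<open>B \<noteq> {}\<close> by (rule cInf_greatest) (auto simp: B_def)
    have goodm: "\<forall>y. r m y \<le> r' m y"
    proof (rule ccontr)
      assume "\<not> (\<forall>y. r m y \<le> r' m y)"
      then obtain y where y: "r m y > r' m y" by (auto simp: not_le)
      show False
      proof (cases "m = 0")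
        case True then show False using y r_zero[OF run1] r_zero[OF run2] by simp
      next
        case False
        define e where "e = r m y - r' m y"
        have e0: "e > 0" using y unfolding e_def by simp
        define \<sigma> where "\<sigma> = max 0 (m - e / (2 * (C + 1)))"
        have ep: "e / (2 * (C + 1)) > 0" using e0 C0 by simp
        have s1: "0 \<le> \<sigma>" "\<sigma> < m" using ep m0 False unfolding \<sigma>_def by auto
        have "m - \<sigma> \<le> e / (2 * (C + 1))" unfolding \<sigma>_def by auto
        then have "C * (m - \<sigma>) \<le> C * (e / (2 * (C + 1)))" using C0 by (rule mult_left_mono)
        also have "\<dots> < e" using e0 C0 by (simp add: field_simps, smt (verit) mult_nonneg_nonneg)
        finally have Ce: "C * (m - \<sigma>) < e" .
        have "r \<sigma> y > r' \<sigma> y"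
          using r_lip[OF run2 s1(1), of m y] r_mono[OF run1 s1(1), of m y] s1 Ce
          unfolding e_def C_def by auto
        then have "\<sigma> \<in> B" using s1 unfolding B_def by (auto simp: not_le)
        then show False using lower s1 by force
      qed
    qed
    obtain b where b: "b > m" and bg: "\<And>\<tau>. m \<le> \<tau> \<and> \<tau> < b \<Longrightarrow> \<forall>y. r \<tau> y \<le> r' \<tau> y"
      using local_step[OF run1 run2 m0 goodm] by blast
    obtain \<tau> where "\<tau> \<in> B" "\<tau> < b"
      using cInf_less_iff[OF \<open>B \<noteq> {}\<close> bdd] b unfolding m_def by blast
    then show False using lower[of \<tau>] bg[of \<tau>] unfolding B_def by auto
  qed
  then show ?thesis using assms(2,6) unfolding B_def by force
qed

end
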